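(* If $\bar f:[a,b]\to\mathbb{R}_\mathcal{I}$ is continuous on $[a,b]$, then $\bar f$ is interval Riemann integrable on $[a,b]$.
   Context: An interval number is a closed interval $\bar a=[a_l,a_r]$ with $a_l<a_r$ real; $\mathbb{R}_\mathcal{I}$ is the set of interval numbers. Write $a_c=(a_l+a_r)/2$, $a_w=(a_r-a_l)/2>0$, $\bar a=\langle a_c;a_w\rangle=[a_c-a_w,a_c+a_w]$. Operations: $\bar a+\bar b=\langle a_c+b_c;a_wb_w\rangle$, $k\bar a=\langle ka_c;a_w^k\rangle$ for real $k$. Distance $d(\bar a,\bar b)=\sqrt{(a_c-b_c)^2+(\ln a_w-\ln b_w)^2}$; continuity is with respect to $d$. $\bar f$ is interval Riemann integrable with integral $\bar A\in\mathbb{R}_\mathcal{I}$ if for every $\varepsilon>0$ there is $\delta>0$ such that for every partition $a=t_0<\dots<t_n=b$ with $t_i-t_{i-1}<\delta$ and tags $\xi_i\in[t_{i-1},t_i]$, $d\big(\sum_{i=1}^n(t_i-t_{i-1})\bar f(\xi_i),\bar A\big)<\varepsilon$. *)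

theory Defs
  imports "HOL-Analysis.Analysis"
begin

text \<open>Interval numbers [a_l,a_r] with a_l < a_r, represented in midpoint-radius form
  (a_c, a_w) with a_w > 0, i.e. the interval [a_c - a_w, a_c + a_w].\<close>

typedef interval = "{(c::real, w::real). w > 0}"
  by (rule exI[of _ "(0,1)"]) simp

definition ictr :: "interval \<Rightarrow> real" where "ictr A = fst (Rep_interval A)"
definition iwid :: "interval \<Rightarrow> real" where "iwid A = snd (Rep_interval A)"

definition imk :: "real \<Rightarrow> real \<Rightarrow> interval" where
  "imk c w = Abs_interval (c, w)"

definition ilower :: "interval \<Rightarrow> real" where "ilower A = ictr A - iwid A"
definition iupper :: "interval \<Rightarrow> real" where "iupper A = ictr A + iwid A"

definition iadd :: "interval \<Rightarrow> interval \<Rightarrow> interval" where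
  "iadd A B = imk (ictr A + ictr B) (iwid A * iwid B)"

definition iscale :: "real \<Rightarrow> interval \<Rightarrow> interval" where
  "iscale k A = imk (k * ictr A) (iwid A powr k)"

definition izero :: interval where "izero = imk 0 1"

definition idist :: "interval \<Rightarrow> interval \<Rightarrow> real" where
  "idist A B = sqrt ((ictr A - ictr B)\<^sup>2 + (ln (iwid A) - ln (iwid B))\<^sup>2)"

definition icontinuous_on :: "real \<Rightarrow> real \<Rightarrow> (real \<Rightarrow> interval) \<Rightarrow> bool" where
  "icontinuous_on a b f \<longleftrightarrow>
     (\<forall>x\<in>{a..b}. \<forall>\<epsilon>>0. \<exists>\<delta>>0. \<forall>y\<in>{a..b}. \<bar>y - x\<bar> < \<delta> \<longrightarrow> idist (f y) (f x) < \<epsilon>)"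

fun iriemann_sum :: "(real \<Rightarrow> interval) \<Rightarrow> (nat \<Rightarrow> real) \<Rightarrow> (nat \<Rightarrow> real) \<Rightarrow> nat \<Rightarrow> interval" where
  "iriemann_sum f t \<xi> 0 = izero"
| "iriemann_sum f t \<xi> (Suc n) =
     iadd (iriemann_sum f t \<xi> n) (iscale (t (Suc n) - t n) (f (\<xi> (Suc n))))"

definition iriemann_integrable :: "real \<Rightarrow> real \<Rightarrow> (real \<Rightarrow> interval) \<Rightarrow> bool" where
  "iriemann_integrable a b f \<longleftrightarrow>
     (\<exists>A::interval. \<forall>\<epsilon>>0. \<exists>\<delta>>0. \<forall>(n::nat) (t::nat \<Rightarrow> real) (\<xi>::nat \<Rightarrow> real).
        n \<ge> 1 \<and> t 0 = a \<and> t n = b \<and>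
        (\<forall>i\<in>{1..n}. t (i - 1) < t i \<and> t i - t (i - 1) < \<delta> \<and> t (i - 1) \<le> \<xi> i \<and> \<xi> i \<le> t i)
        \<longrightarrow> idist (iriemann_sum f t \<xi> n) A < \<epsilon>)"

end

theory Submission
  imports Defs
begin

definition rsum :: "(real \<Rightarrow> real) \<Rightarrow> (nat \<Rightarrow> real) \<Rightarrow> (nat \<Rightarrow> real) \<Rightarrow> nat \<Rightarrow> real" where
  "rsum g t \<xi> n = (\<Sum>i\<in>{1..n}. (t i - t (i - 1)) * g (\<xi> i))"

lemma rsum_Suc: "rsum g t \<xi> (Suc n) = rsum g t \<xi> n + (t (Suc n) - t n) * g (\<xi> (Suc n))"
  by (simp add: rsum_def)

lemma iwid_pos: "iwid A > 0"
  using Rep_interval[of A] by (auto simp: iwid_def)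

lemma imk_ictr: "w > 0 \<Longrightarrow> ictr (imk c w) = c"
  by (simp add: imk_def ictr_def Abs_interval_inverse)

lemma imk_iwid: "w > 0 \<Longrightarrow> iwid (imk c w) = w"
  by (simp add: imk_def iwid_def Abs_interval_inverse)

lemma sum_ctr: "ictr (iriemann_sum f t \<xi> n) = rsum (\<lambda>x. ictr (f x)) t \<xi> n"
proof (induction n)
  case 0 then show ?case by (simp add: izero_def imk_ictr rsum_def)
next
  case (Suc n)
  have p1: "iwid (iriemann_sum f t \<xi> n) > 0" by (rule iwid_pos)
  have p3: "iwid (f (\<xi> (Suc n))) > 0" by (rule iwid_pos)
  have p2: "iwid (f (\<xi> (Suc n))) powr (t (Suc n) - t n) > 0" using p3 by simp
  show ?case
    using Suc p1 p2 p3
    by (simp add: rsum_Suc iadd_def iscale_def imk_ictr imk_iwid)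
qed

lemma sum_wid: "ln (iwid (iriemann_sum f t \<xi> n)) = rsum (\<lambda>x. ln (iwid (f x))) t \<xi> n"
proof (induction n)
  case 0 then show ?case by (simp add: izero_def imk_iwid rsum_def)
next
  case (Suc n)
  have p1: "iwid (iriemann_sum f t \<xi> n) > 0" by (rule iwid_pos)
  have p3: "iwid (f (\<xi> (Suc n))) > 0" by (rule iwid_pos)
  have p2: "iwid (f (\<xi> (Suc n))) powr (t (Suc n) - t n) > 0" using p3 by simp
  show ?case
    using Suc p1 p2 p3
    by (simp add: rsum_Suc iadd_def iscale_def imk_iwid ln_mult ln_powr)
qed

lemma mono_part:
  fixes m k n :: nat and t :: "nat \<Rightarrow> real"
  assumes "\<forall>i\<in>{1..n}. t (i - 1) < t i" "m \<le> k" "k \<le> n"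
  shows "t m \<le> t k"
proof -
  have "m + j \<le> n \<longrightarrow> t m \<le> t (m + j)" for j
  proof (induction j)
    case 0 then show ?case by simp
  next
    case (Suc j)
    show ?case
    proof
      assume h: "m + Suc j \<le> n"
      then have "m + Suc j \<in> {1..n}" by simp
      then have "t (m + Suc j - 1) < t (m + Suc j)" using assms(1) by blast
      then show "t m \<le> t (m + Suc j)" using Suc h by simp
    qed
  qed
  from this[of "k - m"] assms show ?thesis by simp
qed

lemma riemann_real:
  assumes ab: "a < b" and cont: "continuous_on {a..b} g" and e: "e > 0"
  shows "\<exists>\<delta>>0. \<forall>n t \<xi>. n \<ge> 1 \<and> t 0 = a \<and> t n = b \<and>
        (\<forall>i\<in>{1..n}. t (i - 1) < t i \<and> t i - t (i - 1) < \<delta> \<and> t (i - 1) \<le> \<xi> i \<and> \<xi> i \<le> t i)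
        \<longrightarrow> \<bar>rsum g t \<xi> n - integral {a..b} g\<bar> < e"
proof -
  define e' where "e' = e / (2 * (b - a))"
  have e': "e' > 0" using ab e by (simp add: e'_def)
  have "uniformly_continuous_on {a..b} g"
    using cont by (simp add: compact_uniformly_continuous)
  then obtain d where d: "d > 0"
    and dd: "\<And>x x'. x \<in> {a..b} \<Longrightarrow> x' \<in> {a..b} \<Longrightarrow> dist x' x < d \<Longrightarrow> dist (g x') (g x) < e'"
    using e' unfolding uniformly_continuous_on_def by metis
  show ?thesis
  proof (intro exI[of _ d] conjI d allI impI)
    fix n :: nat and t \<xi> :: "nat \<Rightarrow> real"
    assume H: "n \<ge> 1 \<and> t 0 = a \<and> t n = b \<and>
        (\<forall>i\<in>{1..n}. t (i - 1) < t i \<and> t i - t (i - 1) < d \<and> t (i - 1) \<le> \<xi> i \<and> \<xi> i \<le> t i)"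
    then have t0: "t 0 = a" and tn: "t n = b"
      and P: "\<And>i. i \<in> {1..n} \<Longrightarrow> t (i - 1) < t i \<and> t i - t (i - 1) < d \<and> t (i - 1) \<le> \<xi> i \<and> \<xi> i \<le> t i"
      by auto
    have inc: "\<forall>i\<in>{1..n}. t (i - 1) < t i" using P by blast
    have rng: "t m \<in> {a..b}" if "m \<le> n" for m
      using mono_part[OF inc, of 0 m] mono_part[OF inc, of m n] that t0 tn by auto
    have "m \<le> n \<longrightarrow> \<bar>rsum g t \<xi> m - integral {a..t m} g\<bar> \<le> (t m - a) * e'" for m
    proof (induction m)
      case 0 then show ?case by (simp add: rsum_def t0)
    next
      case (Suc m)
      show ?case
      proof
        assume sm: "Suc m \<le> n"
        have IH: "\<bar>rsum g t \<xi> m - integral {a..t m} g\<bar> \<le> (t m - a) * e'" using Suc sm by simp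
        have Pm: "t m < t (Suc m) \<and> t (Suc m) - t m < d \<and> t m \<le> \<xi> (Suc m) \<and> \<xi> (Suc m) \<le> t (Suc m)"
          using P[of "Suc m"] sm by simp
        have r1: "t m \<in> {a..b}" and r2: "t (Suc m) \<in> {a..b}" using rng sm by auto
        let ?u = "t m" and ?v = "t (Suc m)" and ?x = "\<xi> (Suc m)"
        have cuv: "continuous_on {?u..?v} g" by (rule continuous_on_subset[OF cont]) (use r1 r2 in auto)
        have cav: "continuous_on {a..?v} g" by (rule continuous_on_subset[OF cont]) (use r1 r2 in auto)
        have comb: "integral {a..?v} g = integral {a..?u} g + integral {?u..?v} g"
          using Henstock_Kurzweil_Integration.integral_combine[of a ?u ?v g] r1 Pm
            integrable_continuous_interval[OF cav] by auto
        have xr: "?x \<in> {a..b}" using Pm r1 r2 by auto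
        have bnd0: "norm (integral {?u..?v} (\<lambda>y. g ?x - g y)) \<le> e' * Henstock_Kurzweil_Integration.content {?u..?v}"
        proof (rule has_integral_bound_real[where S="{}"])
          show "0 \<le> e'" using e' by simp
          show "finite {}" by simp
          show "((\<lambda>y. g ?x - g y) has_integral integral {?u..?v} (\<lambda>y. g ?x - g y)) {?u..?v}"
            using cuv by (auto intro!: continuous_intros integrable_continuous_interval simp: has_integral_integral)
          fix y assume y: "y \<in> {?u..?v} - {}"
          then have yr: "y \<in> {a..b}" using r1 r2 by auto
          have "dist ?x y < d" using y Pm by (auto simp: dist_real_def)
          then have "dist (g ?x) (g y) < e'" using dd[OF yr xr] by simp
          then show "norm (g ?x - g y) \<le> e'" by (simp add: dist_norm)
        qed
        have bnd: "norm (integral {?u..?v} (\<lambda>y. g ?x - g y)) \<le> e' * (?v - ?u)"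
          using bnd0 Pm by simp
        have ieq: "integral {?u..?v} (\<lambda>y. g ?x - g y) = (?v - ?u) * g ?x - integral {?u..?v} g"
          using integral_diff[of "\<lambda>y. g ?x" "{?u..?v}" g] integrable_continuous_interval[OF cuv] Pm
          by (simp add: integral_const_real integrable_const_ivl)
        have "\<bar>(?v - ?u) * g ?x - integral {?u..?v} g\<bar> \<le> (?v - ?u) * e'"
          using bnd ieq Pm by (simp add: mult.commute)
        moreover have "rsum g t \<xi> (Suc m) - integral {a..?v} g = (rsum g t \<xi> m - integral {a..?u} g) + ((?v - ?u) * g ?x - integral {?u..?v} g)"
          unfolding rsum_Suc comb by simp
        moreover have "(?v - a) * e' = (?u - a) * e' + (?v - ?u) * e'" by (simp add: algebra_simps)
        ultimately show "\<bar>rsum g t \<xi> (Suc m) - integral {a..t (Suc m)} g\<bar> \<le> (t (Suc m) - a) * e'"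
          using IH abs_triangle_ineq[of "rsum g t \<xi> m - integral {a..?u} g" "(?v - ?u) * g ?x - integral {?u..?v} g"]
          by linarith
      qed
    qed
    then have "\<bar>rsum g t \<xi> n - integral {a..b} g\<bar> \<le> (b - a) * e'" using tn by auto
    also have "\<dots> = e / 2" using ab by (simp add: e'_def field_simps)
    also have "\<dots> < e" using e by simp
    finally show "\<bar>rsum g t \<xi> n - integral {a..b} g\<bar> < e" .
  qed
qed

theorem theorem5p3:
  fixes a b :: real and f :: "real \<Rightarrow> interval"
  assumes "a < b"
    and "icontinuous_on a b f"
  shows "iriemann_integrable a b f"
proof -
  let ?g1 = "\<lambda>x. ictr (f x)" and ?g2 = "\<lambda>x. ln (iwid (f x))"
  have d1: "\<bar>ictr A - ictr B\<bar> \<le> idist A B" for A B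
    unfolding idist_def by (rule real_le_rsqrt) simp
  have d2: "\<bar>ln (iwid A) - ln (iwid B)\<bar> \<le> idist A B" for A B
    unfolding idist_def by (rule real_le_rsqrt) simp
  have c1: "continuous_on {a..b} ?g1" unfolding continuous_on_iff
  proof (intro ballI allI impI)
    fix x e :: real assume "x \<in> {a..b}" "e > 0"
    then obtain d where "d > 0" "\<forall>y\<in>{a..b}. \<bar>y - x\<bar> < d \<longrightarrow> idist (f y) (f x) < e"
      using assms(2) unfolding icontinuous_on_def by blast
    then show "\<exists>d>0. \<forall>x'\<in>{a..b}. dist x' x < d \<longrightarrow> dist (?g1 x') (?g1 x) < e"
      using d1 by (auto simp: dist_real_def intro!: exI[of _ d] le_less_trans[OF d1])
  qed
  have c2: "continuous_on {a..b} ?g2" unfolding continuous_on_iff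
  proof (intro ballI allI impI)
    fix x e :: real assume "x \<in> {a..b}" "e > 0"
    then obtain d where "d > 0" "\<forall>y\<in>{a..b}. \<bar>y - x\<bar> < d \<longrightarrow> idist (f y) (f x) < e"
      using assms(2) unfolding icontinuous_on_def by blast
    then show "\<exists>d>0. \<forall>x'\<in>{a..b}. dist x' x < d \<longrightarrow> dist (?g2 x') (?g2 x) < e"
      using d2 by (auto simp: dist_real_def intro!: exI[of _ d] le_less_trans[OF d2])
  qed
  define A where "A = imk (integral {a..b} ?g1) (exp (integral {a..b} ?g2))"
  have Ac: "ictr A = integral {a..b} ?g1" and Aw: "ln (iwid A) = integral {a..b} ?g2"
    by (simp_all add: A_def imk_ictr imk_iwid)
  show ?thesis unfolding iriemann_integrable_def
  proof (intro exI[of _ A] allI impI)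
    fix e :: real assume e: "e > 0"
    obtain d1 where "d1 > 0" and D1: "\<forall>n t \<xi>. n \<ge> 1 \<and> t 0 = a \<and> t n = b \<and>
        (\<forall>i\<in>{1..n}. t (i - 1) < t i \<and> t i - t (i - 1) < d1 \<and> t (i - 1) \<le> \<xi> i \<and> \<xi> i \<le> t i)
        \<longrightarrow> \<bar>rsum ?g1 t \<xi> n - integral {a..b} ?g1\<bar> < e / 2"
      using riemann_real[OF assms(1) c1, of "e/2"] e by auto
    obtain d2 where "d2 > 0" and D2: "\<forall>n t \<xi>. n \<ge> 1 \<and> t 0 = a \<and> t n = b \<and>
        (\<forall>i\<in>{1..n}. t (i - 1) < t i \<and> t i - t (i - 1) < d2 \<and> t (i - 1) \<le> \<xi> i \<and> \<xi> i \<le> t i)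
        \<longrightarrow> \<bar>rsum ?g2 t \<xi> n - integral {a..b} ?g2\<bar> < e / 2"
      using riemann_real[OF assms(1) c2, of "e/2"] e by auto
    show "\<exists>\<delta>>0. \<forall>n t \<xi>. 1 \<le> n \<and> t 0 = a \<and> t n = b \<and>
        (\<forall>i\<in>{1..n}. t (i - 1) < t i \<and> t i - t (i - 1) < \<delta> \<and> t (i - 1) \<le> \<xi> i \<and> \<xi> i \<le> t i)
        \<longrightarrow> idist (iriemann_sum f t \<xi> n) A < e"
    proof (intro exI[of _ "min d1 d2"] conjI allI impI)
      show "min d1 d2 > 0" using \<open>d1 > 0\<close> \<open>d2 > 0\<close> by simp
      fix n :: nat and t \<xi> :: "nat \<Rightarrow> real"
      assume H: "1 \<le> n \<and> t 0 = a \<and> t n = b \<and>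
        (\<forall>i\<in>{1..n}. t (i - 1) < t i \<and> t i - t (i - 1) < min d1 d2 \<and> t (i - 1) \<le> \<xi> i \<and> \<xi> i \<le> t i)"
      have h1: "\<bar>rsum ?g1 t \<xi> n - integral {a..b} ?g1\<bar> < e / 2"
        using D1 H by auto
      have h2: "\<bar>rsum ?g2 t \<xi> n - integral {a..b} ?g2\<bar> < e / 2"
        using D2 H by auto
      define u where "u = rsum ?g1 t \<xi> n - integral {a..b} ?g1"
      define v where "v = rsum ?g2 t \<xi> n - integral {a..b} ?g2"
      have "\<bar>u\<bar>\<^sup>2 < (e/2)\<^sup>2" using h1 u_def by (intro power_strict_mono) auto
      then have U: "u\<^sup>2 < (e/2)\<^sup>2" by simp
      have "\<bar>v\<bar>\<^sup>2 < (e/2)\<^sup>2" using h2 v_def by (intro power_strict_mono) auto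
      then have V: "v\<^sup>2 < (e/2)\<^sup>2" by simp
      have "u\<^sup>2 + v\<^sup>2 < e\<^sup>2" using U V by (simp add: power_divide) (smt (verit) zero_le_power2)
      then have "sqrt (u\<^sup>2 + v\<^sup>2) < sqrt (e\<^sup>2)" by (rule real_sqrt_less_mono)
      then have "sqrt (u\<^sup>2 + v\<^sup>2) < e" using e by simp
      then show "idist (iriemann_sum f t \<xi> n) A < e"
        unfolding idist_def sum_ctr sum_wid Ac Aw u_def v_def .
    qed
  qed
qed

end
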